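(* There exist an absolute constant $C>0$ and an integer $n_0$ such that for all $0<b<B\le1$ and every $n\ge n_0$ there is an instance $\langle A,f,c\rangle$ with $|A|=n$, $f$ subadditive, and $p(\{i\})\le b$ for all $i\in A$, such that $$\frac{\textsc{Max-Reward}(B)}{\textsc{Max-Reward}(b)}\ge C\sqrt n.$$
   Context: An instance $\langle A,f,c\rangle$ consists of a finite set $A$ of agents, a monotone nondecreasing $f:2^A\to[0,1]$, and costs $c_i\ge0$. For $S\subseteq A$, $i\in S$: $f_S(i)=f(S)-f(S\setminus\{i\})$; $p(S)=\sum_{i\in S}c_i/f_S(i)$ (conventions: $0$ if $c_i=0=f_S(i)$, $\infty$ if $c_i>0=f_S(i)$). $f$ is subadditive if $f(S\cup S')\le f(S)+f(S')$ for all $S,S'\subseteq A$. $\textsc{Max-Reward}(B)=\max\{f(S):S\subseteq A,\ p(S)\le B\}$. *)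

theory Defs
  imports Complex_Main "HOL-Library.Extended_Real"
begin

definition marg :: "('a set \<Rightarrow> real) \<Rightarrow> 'a set \<Rightarrow> 'a \<Rightarrow> real" where
  "marg f S i = f S - f (S - {i})"

definition pay :: "('a set \<Rightarrow> real) \<Rightarrow> ('a \<Rightarrow> real) \<Rightarrow> 'a set \<Rightarrow> ereal" where
  "pay f c S = (\<Sum>i\<in>S. if marg f S i = 0 then (if c i = 0 then 0 else \<infinity>)
                        else ereal (c i / marg f S i))"

definition is_instance :: "'a set \<Rightarrow> ('a set \<Rightarrow> real) \<Rightarrow> ('a \<Rightarrow> real) \<Rightarrow> bool" where
  "is_instance A f c \<longleftrightarrow> finite A
     \<and> (\<forall>S. S \<subseteq> A \<longrightarrow> 0 \<le> f S \<and> f S \<le> 1)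
     \<and> (\<forall>S T. S \<subseteq> T \<and> T \<subseteq> A \<longrightarrow> f S \<le> f T)
     \<and> (\<forall>i\<in>A. 0 \<le> c i)"

definition subadditive_on :: "'a set \<Rightarrow> ('a set \<Rightarrow> real) \<Rightarrow> bool" where
  "subadditive_on A f \<longleftrightarrow> (\<forall>S T. S \<subseteq> A \<longrightarrow> T \<subseteq> A \<longrightarrow> f (S \<union> T) \<le> f S + f T)"

definition max_reward :: "'a set \<Rightarrow> ('a set \<Rightarrow> real) \<Rightarrow> ('a \<Rightarrow> real) \<Rightarrow> real \<Rightarrow> real" where
  "max_reward A f c B = Max {f S | S. S \<subseteq> A \<and> pay f c S \<le> ereal B}"

end

theory Submission
  imports Defs
begin

lemma pay_const:
  assumes "finite S" "\<forall>i\<in>S. marg f S i = d" "d \<noteq> 0"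
  shows "pay f (\<lambda>_. c0) S = ereal (real (card S) * (c0 / d))"
proof -
  have "pay f (\<lambda>_. c0) S = (\<Sum>i\<in>S. ereal (c0 / d))"
    unfolding pay_def using assms(2,3) by (intro sum.cong) auto
  also have "\<dots> = ereal (\<Sum>i\<in>S. c0 / d)" by (rule sum_ereal)
  also have "\<dots> = ereal (real (card S) * (c0 / d))" by simp
  finally show ?thesis .
qed

definition fcon :: "nat \<Rightarrow> nat set \<Rightarrow> real" where
  "fcon n S = (if S = {0..<n} then 1 else if S = {} then 0
      else 1 / sqrt (real n) + (real (card S) - 1) * ((1 - 2 / sqrt (real n)) / (real n - 2)))"

lemma construction:
  fixes n :: nat and b B :: real
  assumes n16: "n \<ge> 16" and bpos: "0 < b" and bB: "b < B" and B1: "B \<le> 1"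
  shows "\<exists>(A::nat set) f c. is_instance A f c \<and> card A = n \<and> subadditive_on A f
              \<and> (\<forall>i\<in>A. pay f c {i} \<le> ereal b)
              \<and> max_reward A f c B / max_reward A f c b \<ge> (1/3) * sqrt (real n)"
proof -
  define A where "A = {0..<n}"
  define s where "s = sqrt (real n)"
  define a where "a = (1 - 2 / s) / (real n - 2)"
  define P where "P = min B (real n * b)"
  define c0 where "c0 = P / (real n * s)"
  define f where "f = fcon n"
  define c where "c = (\<lambda>_::nat. c0)"
  have nr: "real n \<ge> 16" using n16 by simp
  have s4: "s \<ge> 4" unfolding s_def
    using real_sqrt_le_mono[OF nr] by simp
  have ss: "s * s = real n" unfolding s_def by simp
  have apos: "a > 0" unfolding a_def using s4 nr by (simp add: field_simps)
  have na: "(real n - 2) * a = 1 - 2 / s" unfolding a_def using nr by simp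
  have a_le: "a * s \<le> 1"
  proof -
    have "4 * s \<le> s * s" using s4 by (simp add: mult_right_mono)
    hence "s \<le> real n - 2" using ss s4 by linarith
    hence "a * s \<le> a * (real n - 2)" using apos by simp
    also have "\<dots> \<le> 1" using na s4 by (simp add: mult.commute)
    finally show ?thesis .
  qed
  have finA: "finite A" and cardA: "card A = n" unfolding A_def by auto
  have fA: "f A = 1" unfolding f_def fcon_def A_def by simp
  have fE: "f {} = 0" unfolding f_def fcon_def A_def using n16 by auto
  have fS: "f S = 1/s + (real (card S) - 1) * a" if "S \<noteq> A" "S \<noteq> {}" for S
    using that unfolding f_def fcon_def A_def s_def a_def by simp
  have cardlt: "card S < n" if "S \<subseteq> A" "S \<noteq> A" for S
    using psubset_card_mono[OF finA] that cardA by auto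
  have cardge: "card S \<ge> 1" if "S \<subseteq> A" "S \<noteq> {}" for S
    using that finA by (meson card_0_eq finite_subset less_one not_le)
  have Ppos: "P > b" unfolding P_def using bB bpos nr by auto
  have PleB: "P \<le> B" unfolding P_def by simp
  have Plenb: "P \<le> real n * b" unfolding P_def by simp
  have c0pos: "c0 > 0" unfolding c0_def using Ppos bpos s4 nr by simp
  have spos: "s > 0" using s4 by simp
  have s13: "1/s \<le> 3/s" using spos by (simp add: divide_right_mono)
  have s03: "0 \<le> 3/s" using spos by simp
  have frange: "0 \<le> f S \<and> f S \<le> 1" if "S \<subseteq> A" for S
  proof (cases "S = A \<or> S = {}")
    case True thus ?thesis using fA fE by auto
  next
    case False
    hence k1: "card S \<ge> 1" using cardge that by blast
    have k2: "card S \<le> n - 1" using cardlt[OF that] False by simp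
    have "real (card S) - 1 \<le> real n - 2" using k2 n16 by linarith
    hence "(real (card S) - 1) * a \<le> (real n - 2) * a" using apos by (simp add: mult_right_mono)
    hence "f S \<le> 1 - 1/s" using fS False na by simp
    moreover have "f S \<ge> 0" using fS False k1 apos spos by simp
    moreover have "0 < 1/s" using spos by simp
    ultimately show ?thesis by linarith
  qed
  have fmono: "f S \<le> f T" if "S \<subseteq> T" "T \<subseteq> A" for S T
  proof -
    consider "T = A" | "S = {}" | "T \<noteq> A" "S \<noteq> {}" by blast
    thus ?thesis
    proof cases
      case 1 thus ?thesis using fA frange that by auto
    next
      case 2 thus ?thesis using fE frange that by auto
    next
      case 3
      hence "S \<noteq> A" "T \<noteq> {}" using that by auto
      moreover have "card S \<le> card T" using that finA by (meson card_mono finite_subset)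
      ultimately show ?thesis using fS 3 apos by (simp add: mult_right_mono)
    qed
  qed
  have inst: "is_instance A f c"
    unfolding is_instance_def c_def using finA frange fmono c0pos by auto
  have subadd: "subadditive_on A f"
    unfolding subadditive_on_def
  proof (intro allI impI)
    fix S T assume S: "S \<subseteq> A" and T: "T \<subseteq> A"
    consider "S = {}" | "T = {}" | "S = A" | "T = A" | "S \<noteq> {}" "T \<noteq> {}" "S \<noteq> A" "T \<noteq> A" by blast
    thus "f (S \<union> T) \<le> f S + f T"
    proof cases
      case 1 thus ?thesis using fE by simp
    next
      case 2 thus ?thesis using fE by simp
    next
      case 3 thus ?thesis using fA frange T S by (simp add: Un_absorb2)
    next
      case 4 thus ?thesis using fA frange T S by (simp add: Un_absorb1)
    next
      case 5
      have fSv: "f S = 1/s + (real (card S) - 1) * a" using fS 5 by simp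
      have fTv: "f T = 1/s + (real (card T) - 1) * a" using fS 5 by simp
      have cu: "card (S \<union> T) \<le> card S + card T" by (rule card_Un_le)
      show ?thesis
      proof (cases "S \<union> T = A")
        case True
        hence "real n \<le> real (card S) + real (card T)" using cu cardA by simp
        hence "(real n - 2) * a \<le> (real (card S) + real (card T) - 2) * a"
          using apos by (simp add: mult_right_mono)
        hence "1 \<le> f S + f T" using fSv fTv na by (simp add: algebra_simps)
        thus ?thesis using True fA by simp
      next
        case False
        have "S \<union> T \<noteq> {}" using 5 by simp
        hence fU: "f (S \<union> T) = 1/s + (real (card (S \<union> T)) - 1) * a" using fS False by simp
        have "(real (card (S \<union> T)) - 1) * a \<le> (real (card S) + real (card T) - 1) * a"
          using apos cu by (simp add: mult_right_mono)
        moreover have "a \<le> 1/s" using a_le spos by (simp add: field_simps)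
        ultimately show ?thesis using fU fSv fTv by (simp add: algebra_simps)
      qed
    qed
  qed
  have payA: "pay f c A = ereal P"
  proof -
    have "\<forall>i\<in>A. marg f A i = 1/s"
    proof
      fix i assume i: "i \<in> A"
      have ne: "A - {i} \<noteq> A" using i by auto
      have cd: "card (A - {i}) = n - 1" using i cardA finA by simp
      have ne2: "A - {i} \<noteq> {}"
      proof
        assume "A - {i} = {}"
        hence "card (A - {i}) = 0" by (metis card.empty)
        thus False using cd n16 by simp
      qed
      from cd have eq: "real (card (A - {i})) - 1 = real n - 2" using n16 by (simp add: of_nat_diff)
      have "f (A - {i}) = 1/s + (real n - 2) * a" using fS[OF ne ne2] unfolding eq .
      hence "f (A - {i}) = 1 - 1/s" using na by simp
      thus "marg f A i = 1/s" unfolding marg_def using fA by simp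
    qed
    hence "pay f c A = ereal (real (card A) * (c0 / (1/s)))"
      unfolding c_def by (rule pay_const[OF finA]) (use spos in simp)
    also have "\<dots> = ereal P" using cardA unfolding c0_def using nr spos by simp
    finally show ?thesis .
  qed
  have paysing: "pay f c {i} = ereal (P / real n)" if "i \<in> A" for i
  proof -
    have ne: "{i} \<noteq> A" using cardA n16 by auto
    have "f {i} = 1/s" using fS[OF ne] by simp
    hence "\<forall>j\<in>{i}. marg f {i} j = 1/s" unfolding marg_def using fE by simp
    hence "pay f c {i} = ereal (real (card {i}) * (c0 / (1/s)))"
      unfolding c_def by (rule pay_const[OF finite.intros(2)[OF finite.intros(1)]]) (use spos in simp)
    also have "\<dots> = ereal (P / real n)" unfolding c0_def using nr spos by simp
    finally show ?thesis .
  qed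
  have paysmall: "\<forall>i\<in>A. pay f c {i} \<le> ereal b"
    using paysing Plenb nr by (simp add: field_simps)
  have paymid: "pay f c S = ereal (real (card S) * (c0 / a))"
    if "S \<subseteq> A" "S \<noteq> A" "card S \<ge> 2" for S
  proof -
    have finS: "finite S" using that finA finite_subset by blast
    have "\<forall>i\<in>S. marg f S i = a"
    proof
      fix i assume i: "i \<in> S"
      have ne1: "S \<noteq> {}" using i by auto
      have ne2: "S - {i} \<noteq> A" using that by auto
      have cd: "card (S - {i}) = card S - 1" using i finS by simp
      have ne3: "S - {i} \<noteq> {}"
      proof
        assume "S - {i} = {}"
        hence "card (S - {i}) = 0" by (metis card.empty)
        thus False using cd that(3) by simp
      qed
      have "real (card (S - {i})) = real (card S) - 1" using cd that by (simp add: of_nat_diff)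
      hence e: "real (card (S - {i})) - 1 = (real (card S) - 1) - 1" by simp
      have "f S - f (S - {i}) = (real (card S) - 1) * a - (real (card (S - {i})) - 1) * a"
        using fS[OF that(2) ne1] fS[OF ne2 ne3] by simp
      also have "\<dots> = a" unfolding e by (simp add: algebra_simps)
      finally show "marg f S i = a" unfolding marg_def .
    qed
    thus ?thesis unfolding c_def by (rule pay_const[OF finS]) (use apos in simp)
  qed
  define RB where "RB = {f S | S. S \<subseteq> A \<and> pay f c S \<le> ereal B}"
  define Rb where "Rb = {f S | S. S \<subseteq> A \<and> pay f c S \<le> ereal b}"
  have finRB: "finite RB" unfolding RB_def
    by (rule finite_subset[of _ "f ` Pow A"]) (auto simp: finA)
  have finRb: "finite Rb" unfolding Rb_def
    by (rule finite_subset[of _ "f ` Pow A"]) (auto simp: finA)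
  have MB: "max_reward A f c B = 1"
    unfolding max_reward_def RB_def[symmetric]
  proof (rule Max_eqI[OF finRB])
    show "y \<le> 1" if "y \<in> RB" for y using that frange unfolding RB_def by auto
    show "1 \<in> RB" unfolding RB_def using payA PleB fA by (auto intro!: exI[of _ A])
  qed
  have zeroA: "0 \<in> A" unfolding A_def using n16 by simp
  have inb: "1/s \<in> Rb"
  proof -
    have ne: "{0} \<noteq> A" using cardA n16 by auto
    have "f {0} = 1/s" using fS[OF ne] by simp
    thus ?thesis unfolding Rb_def using paysmall zeroA by (auto intro!: exI[of _ "{0}"])
  qed
  have bnd: "y \<le> 3/s" if yR: "y \<in> Rb" for y
  proof -
    obtain S where S: "y = f S" "S \<subseteq> A" "pay f c S \<le> ereal b" using yR unfolding Rb_def by auto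
    consider "S = {}" | "S = A" | "card S = 1" | "S \<noteq> A" "card S \<ge> 2" "S \<noteq> {}"
      using cardge[OF S(2)] by force
    thus ?thesis
    proof cases
      case 1 thus ?thesis using S fE s03 by simp
    next
      case 2 thus ?thesis using S payA Ppos by simp
    next
      case 3
      then obtain x where "S = {x}" by (auto simp: card_1_singleton_iff)
      have ne: "S \<noteq> A" using 3 cardA n16 by auto
      have "S \<noteq> {}" using 3 by auto
      hence "f S = 1/s" using fS[OF ne] 3 by simp
      thus ?thesis using S s13 by simp
    next
      case 4
      define k where "k = real (card S)"
      have "k * (c0 / a) \<le> b" using paymid[OF S(2) 4(1,2)] S(3) unfolding k_def by simp
      hence "k * (c0 / a) < real n * s * c0" using Ppos unfolding c0_def using nr spos by simp
      hence "k * c0 < real n * s * a * c0" using apos by (simp add: field_simps)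
      hence kl: "k < real n * s * a" using c0pos by simp
      have fv: "f S = 1/s + (k - 1) * a" using fS 4 unfolding k_def by simp
      have "f S \<le> 1/s + k * a" using fv apos by (simp add: algebra_simps)
      also have "\<dots> \<le> 1/s + real n * s * a * a" using kl apos by (simp add: mult_right_mono)
      also have "\<dots> \<le> 3/s"
      proof -
        have "real n * a \<le> real n / (real n - 2)" unfolding a_def using nr spos s4
          by (simp add: field_simps)
        also have "\<dots> \<le> 8/7" using nr by (simp add: field_simps)
        finally have na1: "real n * a \<le> 8/7" .
        have na0: "0 \<le> real n * a" using apos by simp
        have "(real n * a) * (real n * a) \<le> (8/7) * (8/7)"
          by (rule mult_mono[OF na1 na1]) (use na0 in simp_all)
        hence sq2: "(real n * a) * (real n * a) \<le> 2" by simp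
        have "real n * s * a * a * s = (real n * a) * ((s * s) * a)" by (simp add: algebra_simps)
        also have "\<dots> = (real n * a) * (real n * a)" unfolding ss by simp
        finally have eqq: "real n * s * a * a * s = (real n * a) * (real n * a)" .
        have "real n * s * a * a * s \<le> 2" using eqq sq2 by linarith
        hence "real n * s * a * a \<le> 2 / s" using spos by (simp add: field_simps)
        thus ?thesis by simp
      qed
      finally show ?thesis using S by simp
    qed
  qed
  have Mb: "max_reward A f c b \<le> 3/s" "max_reward A f c b \<ge> 1/s"
    unfolding max_reward_def Rb_def[symmetric]
    using bnd Max_in[OF finRb] Max_ge[OF finRb inb] inb by auto
  have "(1/3) * s \<le> 1 / max_reward A f c b"
  proof -
    have mp: "max_reward A f c b > 0" using Mb(2) spos by (meson less_le_trans divide_pos_pos zero_less_one)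
    have "(1/3) * s * max_reward A f c b \<le> (1/3) * s * (3/s)"
      by (rule mult_left_mono[OF Mb(1)]) (use spos in simp)
    also have "\<dots> = 1" using spos by simp
    finally show ?thesis using mp by (simp add: field_simps)
  qed
  hence "max_reward A f c B / max_reward A f c b \<ge> (1/3) * sqrt (real n)"
    using MB unfolding s_def by simp
  thus ?thesis using inst cardA subadd paysmall by blast
qed

theorem mainTheorem15:
  shows "\<exists>C::real. C > 0 \<and> (\<exists>n0::nat. \<forall>b B::real. \<forall>n::nat.
           0 < b \<and> b < B \<and> B \<le> 1 \<and> n \<ge> n0 \<longrightarrow>
           (\<exists>(A::nat set) f c. is_instance A f c \<and> card A = n \<and> subadditive_on A f
              \<and> (\<forall>i\<in>A. pay f c {i} \<le> ereal b)
              \<and> max_reward A f c B / max_reward A f c b \<ge> C * sqrt (real n)))"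
  apply (rule exI[of _ "1/3"])
  apply (intro conjI)
   apply simp
  apply (rule exI[of _ 16])
  using construction by blast

end
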